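(* If $w\in L^2$ and $u=Hw$, then $u\in C^{1/2}[0,\pi/2]$, $u(0)=u(\pi/2)=0$, and for all $\sigma,s\in[0,\pi/2]$: $$|u(\sigma)-u(s)|\leqslant\|w\|\,|\sigma-s|^{1/2},\qquad |u(\sigma)|\leqslant\|w\|\,\sigma^{1/2},\qquad |u(\sigma)|\leqslant\|w\|\,|\pi/2-\sigma|^{1/2}.$$
   Context: $L^2$ denotes $L^2(0,\pi/2)$ with norm $\|f\|=\big(\int_0^{\pi/2}|f(\sigma)|^2\,d\sigma\big)^{1/2}$. The kernel is $K(s,\sigma)=\log\Big|\frac{\sin(s+\sigma)}{\sin(s-\sigma)}\Big|$ for $s,\sigma\in(0,\pi/2)$, $s\neq\sigma$, and for $w\in L^2$ the operator $H$ is $(Hw)(\sigma)=\frac1\pi\int_0^{\pi/2}K(s,\sigma)\,w(s)\,ds$, $\sigma\in[0,\pi/2]$. $C^{1/2}[0,\pi/2]$ is the space of Hölder continuous functions with exponent $1/2$. *)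

theory Defs
  imports "HOL-Analysis.Analysis"
begin

definition in_L2 :: "(real \<Rightarrow> real) \<Rightarrow> bool" where
  "in_L2 w \<longleftrightarrow> set_borel_measurable lborel {0..pi/2} w
      \<and> set_integrable lborel {0..pi/2} (\<lambda>s. (w s)\<^sup>2)"

definition L2_norm :: "(real \<Rightarrow> real) \<Rightarrow> real" where
  "L2_norm w = sqrt (LINT s:{0..pi/2}|lborel. (w s)\<^sup>2)"

text \<open>The kernel; its value on the diagonal s = sigma (a null set) is irrelevant, set to 0.\<close>
definition K :: "real \<Rightarrow> real \<Rightarrow> real" where
  "K s \<sigma> = (if s = \<sigma> then 0 else ln \<bar>sin (s + \<sigma>) / sin (s - \<sigma>)\<bar>)"

definition H :: "(real \<Rightarrow> real) \<Rightarrow> real \<Rightarrow> real" where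
  "H w \<sigma> = (1 / pi) * (LINT s:{0..pi/2}|lborel. K s \<sigma> * w s)"

definition holder_on :: "real set \<Rightarrow> real \<Rightarrow> (real \<Rightarrow> real) \<Rightarrow> bool" where
  "holder_on A \<alpha> f \<longleftrightarrow> (\<exists>C. \<forall>x\<in>A. \<forall>y\<in>A. \<bar>f x - f y\<bar> \<le> C * \<bar>x - y\<bar> powr \<alpha>)"

end

theory Submission
  imports Defs
begin


lemma cos_int_integral:
  fixes k :: int
  shows "((\<lambda>x. cos (2 * of_int k * x)) has_integral (if k = 0 then pi/2 else 0)) {0..pi/2}"
proof (cases "k = 0")
  case True
  then show ?thesis using has_integral_const_real[of "1::real" 0 "pi/2"] by (simp add: True real_scaleR_def)
next
  case False
  have d: "\<And>x. ((\<lambda>x. sin (2 * of_int k * x) / (2 * of_int k)) has_real_derivative cos (2 * of_int k * x)) (at x within {0..pi/2})"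
    using False by (auto intro!: derivative_eq_intros)
  have "((\<lambda>x. cos (2 * of_int k * x)) has_integral
      (sin (2 * of_int k * (pi/2)) / (2 * of_int k) - sin (2 * of_int k * 0) / (2 * of_int k))) {0..pi/2}"
    by (rule fundamental_theorem_of_calculus) (auto simp: has_real_derivative_iff_has_vector_derivative[symmetric] intro!: d)
  moreover have "sin (2 * of_int k * (pi/2)) = 0"
    using sin_npi_int[of k] by (simp add: mult.commute)
  ultimately show ?thesis using False by simp
qed

lemma cos_seg_integral:
  fixes n :: nat and a b :: real
  assumes "a \<le> b"
  shows "((\<lambda>x. cos (2 * real n * x)) has_integral (if n = 0 then b - a else (sin (2 * real n * b) - sin (2 * real n * a)) / (2 * real n))) {a..b}"
proof (cases "n = 0")
  case True
  then show ?thesis using has_integral_const_real[of "1::real" a b] assms by (simp add: True real_scaleR_def)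
next
  case False
  have d: "\<And>x. ((\<lambda>x. sin (2 * real n * x) / (2 * real n)) has_real_derivative cos (2 * real n * x)) (at x within {a..b})"
    using False by (auto intro!: derivative_eq_intros)
  have "((\<lambda>x. cos (2 * real n * x)) has_integral
      (sin (2 * real n * b) / (2 * real n) - sin (2 * real n * a) / (2 * real n))) {a..b}"
    by (rule fundamental_theorem_of_calculus) (auto simp: assms has_real_derivative_iff_has_vector_derivative[symmetric] intro!: d)
  then show ?thesis using False by (simp add: diff_divide_distrib)
qed

lemma cos_cos_integral:
  fixes n m :: nat
  shows "((\<lambda>x. cos (2 * real n * x) * cos (2 * real m * x)) has_integral
     (if n = m then (if n = 0 then pi/2 else pi/4) else 0)) {0..pi/2}"
proof -
  have e: "cos (2 * real n * x) * cos (2 * real m * x) =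
     cos (2 * of_int (int n - int m) * x) / 2 + cos (2 * of_int (int n + int m) * x) / 2" for x
    by (simp add: cos_add cos_diff algebra_simps, simp add: field_simps)
  have "((\<lambda>x. cos (2 * of_int (int n - int m) * x) / 2 + cos (2 * of_int (int n + int m) * x) / 2) has_integral
     ((if int n - int m = 0 then pi/2 else 0)/2 + (if int n + int m = 0 then pi/2 else 0)/2)) {0..pi/2}"
    by (intro has_integral_add has_integral_divide cos_int_integral)
  moreover have "((if int n - int m = 0 then pi/2 else 0)/2 + (if int n + int m = 0 then pi/2 else 0)/2)
     = (if n = m then (if n = 0 then pi/2 else pi/4) else (0::real))" by auto
  ultimately show ?thesis unfolding e by simp
qed

lemma sin_sin_integral:
  fixes n m :: nat
  shows "((\<lambda>x. sin (2 * real n * x) * sin (2 * real m * x)) has_integral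
     (if n = m \<and> n \<noteq> 0 then pi/4 else 0)) {0..pi/2}"
proof -
  have e: "sin (2 * real n * x) * sin (2 * real m * x) =
     cos (2 * of_int (int n - int m) * x) / 2 - cos (2 * of_int (int n + int m) * x) / 2" for x
    by (simp add: cos_add cos_diff algebra_simps, simp add: field_simps)
  have "((\<lambda>x. cos (2 * of_int (int n - int m) * x) / 2 - cos (2 * of_int (int n + int m) * x) / 2) has_integral
     ((if int n - int m = 0 then pi/2 else 0)/2 - (if int n + int m = 0 then pi/2 else 0)/2)) {0..pi/2}"
    by (intro has_integral_diff has_integral_divide cos_int_integral)
  moreover have "((if int n - int m = 0 then pi/2 else 0)/2 - (if int n + int m = 0 then pi/2 else 0)/2)
     = (if n = m \<and> n \<noteq> 0 then pi/4 else (0::real))" by auto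
  ultimately show ?thesis unfolding e by simp
qed




lemma bessel_cos:
  fixes t \<sigma> :: real and N :: nat
  assumes t0: "0 \<le> t" and ts: "t \<le> \<sigma>" and sp: "\<sigma> \<le> pi/2"
  shows "(\<Sum>n<N. ((sin (2 * real n * \<sigma>) - sin (2 * real n * t)) / real n)\<^sup>2) \<le> pi * (\<sigma> - t)"
proof -
  define e where "e n = (if n = 0 then 0 else (sin (2 * real n * \<sigma>) - sin (2 * real n * t)) / (2 * real n))" for n
  define a where "a n = 4 / pi * e n" for n
  define g where "g x = (\<Sum>n<N. a n * cos (2 * real n * x))" for x
  have a0: "a 0 = 0" by (simp add: a_def e_def)
  have I1: "((\<lambda>x. (g x)\<^sup>2) has_integral (\<Sum>n<N. (a n)\<^sup>2 * (pi/4))) {0..pi/2}"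
  proof -
    have eq: "(g x)\<^sup>2 = (\<Sum>n<N. \<Sum>m<N. a n * a m * (cos (2 * real n * x) * cos (2 * real m * x)))" for x
      unfolding g_def power2_eq_square sum_product by (simp add: algebra_simps)
    have "((\<lambda>x. \<Sum>n<N. \<Sum>m<N. a n * a m * (cos (2 * real n * x) * cos (2 * real m * x))) has_integral
        (\<Sum>n<N. \<Sum>m<N. a n * a m * (if n = m then (if n = 0 then pi/2 else pi/4) else 0))) {0..pi/2}"
      by (intro has_integral_sum has_integral_mult_right cos_cos_integral finite_lessThan)
    moreover have "(\<Sum>n<N. \<Sum>m<N. a n * a m * (if n = m then (if n = 0 then pi/2 else pi/4) else 0))
        = (\<Sum>n<N. (a n)\<^sup>2 * (pi/4))"
    proof (rule sum.cong[OF refl])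
      fix n assume n: "n \<in> {..<N}"
      have "(\<Sum>m<N. a n * a m * (if n = m then (if n = 0 then pi/2 else pi/4) else 0))
          = a n * a n * (if n = 0 then pi/2 else pi/4)"
        using n by (simp add: if_distrib[of "\<lambda>z. a n * a _ * z"] sum.delta cong: if_cong)
      also have "\<dots> = (a n)\<^sup>2 * (pi/4)" using a0 by (cases "n = 0") (auto simp: power2_eq_square)
      finally show "(\<Sum>m<N. a n * a m * (if n = m then (if n = 0 then pi/2 else pi/4) else 0)) = (a n)\<^sup>2 * (pi/4)" .
    qed
    ultimately show ?thesis unfolding eq by simp
  qed
  have I2: "(g has_integral (\<Sum>n<N. a n * e n)) {t..\<sigma>}"
  proof -
    have "((\<lambda>x. \<Sum>n<N. a n * cos (2 * real n * x)) has_integral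
       (\<Sum>n<N. a n * (if n = 0 then \<sigma> - t else (sin (2 * real n * \<sigma>) - sin (2 * real n * t)) / (2 * real n)))) {t..\<sigma>}"
      using ts by (intro has_integral_sum has_integral_mult_right cos_seg_integral finite_lessThan)
    moreover have "(\<Sum>n<N. a n * (if n = 0 then \<sigma> - t else (sin (2 * real n * \<sigma>) - sin (2 * real n * t)) / (2 * real n)))
       = (\<Sum>n<N. a n * e n)"
      by (rule sum.cong[OF refl]) (simp add: e_def a0)
    ultimately show ?thesis unfolding g_def by simp
  qed
  have gc: "continuous_on S g" for S unfolding g_def by (intro continuous_intros)
  have g2c: "continuous_on S (\<lambda>x. (g x)\<^sup>2)" for S by (intro continuous_intros gc)
  have int2: "(\<lambda>x. (g x)\<^sup>2) integrable_on {c..d}" for c d by (intro integrable_continuous_interval g2c)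
  have "integral {0..t} (\<lambda>x. (g x)\<^sup>2) + integral {t..\<sigma>} (\<lambda>x. (g x)\<^sup>2) = integral {0..\<sigma>} (\<lambda>x. (g x)\<^sup>2)"
    using t0 ts by (rule Henstock_Kurzweil_Integration.integral_combine) (auto intro: int2)
  moreover have "integral {0..\<sigma>} (\<lambda>x. (g x)\<^sup>2) + integral {\<sigma>..pi/2} (\<lambda>x. (g x)\<^sup>2) = integral {0..pi/2} (\<lambda>x. (g x)\<^sup>2)"
    using t0 ts sp by (intro Henstock_Kurzweil_Integration.integral_combine int2) auto
  moreover have "integral {0..t} (\<lambda>x. (g x)\<^sup>2) \<ge> 0" by (intro integral_nonneg int2) auto
  moreover have "integral {\<sigma>..pi/2} (\<lambda>x. (g x)\<^sup>2) \<ge> 0" by (intro integral_nonneg int2) auto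
  moreover have "integral {t..\<sigma>} (\<lambda>x. (g x - 1)\<^sup>2) \<ge> 0"
    by (intro integral_nonneg integrable_continuous_interval continuous_intros gc) auto
  moreover have "integral {t..\<sigma>} (\<lambda>x. (g x - 1)\<^sup>2) = integral {t..\<sigma>} (\<lambda>x. (g x)\<^sup>2) - 2 * (\<Sum>n<N. a n * e n) + (\<sigma> - t)"
  proof -
    have c1: "((\<lambda>x. 1::real) has_integral (\<sigma> - t)) {t..\<sigma>}"
      using has_integral_const_real[of "1::real" t \<sigma>] ts by (simp add: real_scaleR_def)
    have "((\<lambda>x. (g x)\<^sup>2 - 2 * g x + 1) has_integral
        (integral {t..\<sigma>} (\<lambda>x. (g x)\<^sup>2) - 2 * (\<Sum>n<N. a n * e n) + (\<sigma> - t))) {t..\<sigma>}"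
      by (intro has_integral_add has_integral_diff has_integral_mult_right I2 integrable_integral int2 c1)
    moreover have "(\<lambda>x. (g x)\<^sup>2 - 2 * g x + 1) = (\<lambda>x. (g x - 1)\<^sup>2)"
      by (auto simp: power2_eq_square algebra_simps)
    ultimately show ?thesis using ts by (simp add: integral_unique)
  qed
  ultimately have "0 \<le> (\<Sum>n<N. (a n)\<^sup>2 * (pi/4)) - 2 * (\<Sum>n<N. a n * e n) + (\<sigma> - t)"
    using integral_unique[OF I1] by linarith
  moreover have "(\<Sum>n<N. (a n)\<^sup>2 * (pi/4)) = 4/pi * (\<Sum>n<N. (e n)\<^sup>2)"
    by (simp add: a_def sum_distrib_left power2_eq_square)
  moreover have "(\<Sum>n<N. a n * e n) = 4/pi * (\<Sum>n<N. (e n)\<^sup>2)"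
    by (simp add: a_def sum_distrib_left power2_eq_square mult.assoc)
  ultimately have "4/pi * (\<Sum>n<N. (e n)\<^sup>2) \<le> \<sigma> - t" by linarith
  then have "(\<Sum>n<N. 4 * (e n)\<^sup>2) \<le> pi * (\<sigma> - t)"
    by (simp add: sum_distrib_left[symmetric] field_simps)
  moreover have "(\<Sum>n<N. ((sin (2 * real n * \<sigma>) - sin (2 * real n * t)) / real n)\<^sup>2) = (\<Sum>n<N. 4 * (e n)\<^sup>2)"
    by (rule sum.cong[OF refl]) (simp add: e_def power2_eq_square field_simps)
  ultimately show ?thesis by simp
qed




lemma log_series:
  fixes r \<theta> :: real
  assumes r0: "0 \<le> r" and r1: "r < 1"
  shows "(\<lambda>n. r^n * cos (real n * \<theta>) / real n) sums (-(1/2) * ln (1 - 2 * r * cos \<theta> + r\<^sup>2))"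
proof -
  define z where "z = - (complex_of_real r * cis \<theta>)"
  have nz: "cmod z < 1" using r0 r1 by (simp add: z_def norm_mult)
  from sums_Re[OF Ln_series'[OF nz]]
  have s1: "(\<lambda>n. Re (- ((- z) ^ n) / of_nat n)) sums Re (Ln (1 + z))" .
  have t: "Re (- ((- z) ^ n) / of_nat n) = - (r^n * cos (real n * \<theta>) / real n)" for n
    by (simp add: z_def power_mult_distrib Re_divide_of_nat cos_n_Re_cis_pow_n)
  have X: "(cmod (1 + z))\<^sup>2 = 1 - 2 * r * cos \<theta> + r\<^sup>2"
  proof -
    have "r * (r * (cos \<theta> * cos \<theta>)) + r * (r * (sin \<theta> * sin \<theta>)) = r * r * ((sin \<theta>)\<^sup>2 + (cos \<theta>)\<^sup>2)"
      unfolding power2_eq_square by algebra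
    also have "\<dots> = r * r" by simp
    finally have h: "r * (r * (cos \<theta> * cos \<theta>)) + r * (r * (sin \<theta> * sin \<theta>)) = r * r" .
    show ?thesis unfolding z_def cmod_power2 by (simp add: power2_eq_square algebra_simps h)
  qed
  have Xpos: "0 < 1 - 2 * r * cos \<theta> + r\<^sup>2"
  proof -
    have "r * cos \<theta> \<le> r" using r0 by (simp add: mult_left_le)
    then have "1 - 2 * r * cos \<theta> + r\<^sup>2 \<ge> (1 - r)\<^sup>2" by (simp add: power2_eq_square algebra_simps)
    moreover have "(1 - r)\<^sup>2 > 0" using r1 by simp
    ultimately show ?thesis by linarith
  qed
  have nz1: "1 + z \<noteq> 0" using X Xpos by auto
  have "Re (Ln (1 + z)) = ln (cmod (1 + z))" using nz1 by simp
  also have "\<dots> = ln (sqrt ((cmod (1 + z))\<^sup>2))" by simp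
  also have "\<dots> = (1/2) * ln (1 - 2 * r * cos \<theta> + r\<^sup>2)" unfolding X using Xpos by (simp add: ln_sqrt)
  finally have e: "Re (Ln (1 + z)) = (1/2) * ln (1 - 2 * r * cos \<theta> + r\<^sup>2)" .
  have "(\<lambda>n. - (r^n * cos (real n * \<theta>) / real n)) sums ((1/2) * ln (1 - 2 * r * cos \<theta> + r\<^sup>2))"
    using s1 unfolding t e .
  from sums_minus[OF this] show ?thesis by simp
qed




lemma fatou_sq:
  fixes f :: "nat \<Rightarrow> real \<Rightarrow> real" and g :: "real \<Rightarrow> real"
  assumes meas: "\<And>n. f n \<in> borel_measurable lborel"
    and conv: "AE x in lborel. x \<in> A \<longrightarrow> (\<lambda>n. f n x) \<longlonglongrightarrow> g x"
    and A: "A \<in> sets lborel"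
    and bnd: "\<And>n. (\<integral>\<^sup>+x. ennreal (indicator A x * (f n x)\<^sup>2) \<partial>lborel) \<le> ennreal B"
  shows "(\<integral>\<^sup>+x. ennreal (indicator A x * (g x)\<^sup>2) \<partial>lborel) \<le> ennreal B"
proof -
  let ?u = "\<lambda>n x. ennreal (indicator A x * (f n x)\<^sup>2)"
  have um: "\<And>i. ?u i \<in> borel_measurable lborel" using meas A by measurable
  have "AE x in lborel. liminf (\<lambda>n. ?u n x) = ennreal (indicator A x * (g x)\<^sup>2)"
    using conv
  proof eventually_elim
    case (elim x)
    show ?case
    proof (cases "x \<in> A")
      case True
      with elim have "(\<lambda>n. f n x) \<longlonglongrightarrow> g x" by auto
      then have "(\<lambda>n. ?u n x) \<longlonglongrightarrow> ennreal (indicator A x * (g x)\<^sup>2)"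
        by (intro tendsto_ennrealI tendsto_intros)
      then show ?thesis by (simp add: lim_imp_Liminf)
    next
      case False then show ?thesis by (simp add: lim_imp_Liminf)
    qed
  qed
  then have "(\<integral>\<^sup>+x. ennreal (indicator A x * (g x)\<^sup>2) \<partial>lborel) = (\<integral>\<^sup>+x. liminf (\<lambda>n. ?u n x) \<partial>lborel)"
    by (intro nn_integral_cong_AE) (auto elim: eventually_mono)
  also have "\<dots> \<le> liminf (\<lambda>n. integral\<^sup>N lborel (?u n))"
    by (rule nn_integral_liminf[OF um])
  also have "\<dots> \<le> ennreal B"
    using bnd by (intro Liminf_le) (auto intro: always_eventually)
  finally show ?thesis .
qed




definition Lr :: "real \<Rightarrow> real \<Rightarrow> real" where
  "Lr r \<theta> = ln (1 - 2 * r * cos \<theta> + r\<^sup>2)"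

definition Dr :: "real \<Rightarrow> real \<Rightarrow> real \<Rightarrow> real \<Rightarrow> real" where
  "Dr r \<sigma> t s = -(1/2) * (Lr r (2*(s-\<sigma>)) - Lr r (2*(s+\<sigma>)) - Lr r (2*(s-t)) + Lr r (2*(s+t)))"

definition SN :: "nat \<Rightarrow> real \<Rightarrow> real \<Rightarrow> real \<Rightarrow> real \<Rightarrow> real" where
  "SN N r \<sigma> t s = (\<Sum>n<N. (2 * r^n * (sin (2 * real n * \<sigma>) - sin (2 * real n * t)) / real n) * sin (2 * real n * s))"

lemma aux4:
  fixes A B C D S P Q R x :: real
  assumes "A - B = 2*S*P" "C - D = 2*S*Q"
  shows "(2*R*(P - Q)/x)*S = R*A/x - R*B/x - R*C/x + R*D/x"
proof (cases "x = 0")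
  case False
  have A: "A = B + 2*S*P" and C: "C = D + 2*S*Q" using assms by linarith+
  show ?thesis unfolding A C using False by (simp add: field_simps)
qed simp

lemma SN_tendsto:
  assumes "0 \<le> r" "r < 1"
  shows "(\<lambda>N. SN N r \<sigma> t s) \<longlonglongrightarrow> Dr r \<sigma> t s"
proof -
  have ls: "(\<lambda>n. r^n * cos (real n * \<theta>) / real n) sums (-(1/2) * Lr r \<theta>)" for \<theta>
    unfolding Lr_def by (rule log_series[OF assms])
  have trm: "(2 * r^n * (sin (2 * real n * \<sigma>) - sin (2 * real n * t)) / real n) * sin (2 * real n * s)
     = r^n * cos (real n * (2*(s-\<sigma>))) / real n - r^n * cos (real n * (2*(s+\<sigma>))) / real n
       - r^n * cos (real n * (2*(s-t))) / real n + r^n * cos (real n * (2*(s+t))) / real n" for n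
  proof -
    have a: "cos (real n * (2*(s-x))) - cos (real n * (2*(s+x))) = 2 * sin (2 * real n * s) * sin (2 * real n * x)" for x
    proof -
      have "real n * (2*(s-x)) = 2 * real n * s - 2 * real n * x" "real n * (2*(s+x)) = 2 * real n * s + 2 * real n * x"
        by (simp_all add: algebra_simps)
      then show ?thesis by (simp add: cos_diff cos_add)
    qed
    show ?thesis by (rule aux4[OF a a])
  qed
  have "(\<lambda>n. r^n * cos (real n * (2*(s-\<sigma>))) / real n - r^n * cos (real n * (2*(s+\<sigma>))) / real n
       - r^n * cos (real n * (2*(s-t))) / real n + r^n * cos (real n * (2*(s+t))) / real n) sums
     (-(1/2) * Lr r (2*(s-\<sigma>)) - -(1/2) * Lr r (2*(s+\<sigma>)) - -(1/2) * Lr r (2*(s-t)) + -(1/2) * Lr r (2*(s+t)))"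
    by (intro sums_add sums_diff ls)
  then have "(\<lambda>n. (2 * r^n * (sin (2 * real n * \<sigma>) - sin (2 * real n * t)) / real n) * sin (2 * real n * s)) sums Dr r \<sigma> t s"
    unfolding trm Dr_def by (simp add: algebra_simps)
  then show ?thesis unfolding sums_def SN_def .
qed

lemma SN_integral:
  "((\<lambda>s. (SN N r \<sigma> t s)\<^sup>2) has_integral
     (\<Sum>n<N. (2 * r^n * (sin (2 * real n * \<sigma>) - sin (2 * real n * t)) / real n)\<^sup>2 * (if n \<noteq> 0 then pi/4 else 0))) {0..pi/2}"
proof -
  define a where "a n = 2 * r^n * (sin (2 * real n * \<sigma>) - sin (2 * real n * t)) / real n" for n
  have eq: "(SN N r \<sigma> t x)\<^sup>2 = (\<Sum>n<N. \<Sum>m<N. a n * a m * (sin (2 * real n * x) * sin (2 * real m * x)))" for x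
    unfolding SN_def a_def[symmetric] power2_eq_square sum_product by (simp add: algebra_simps)
  have "((\<lambda>x. \<Sum>n<N. \<Sum>m<N. a n * a m * (sin (2 * real n * x) * sin (2 * real m * x))) has_integral
      (\<Sum>n<N. \<Sum>m<N. a n * a m * (if n = m \<and> n \<noteq> 0 then pi/4 else 0))) {0..pi/2}"
    by (intro has_integral_sum has_integral_mult_right sin_sin_integral finite_lessThan)
  moreover have "(\<Sum>n<N. \<Sum>m<N. a n * a m * (if n = m \<and> n \<noteq> 0 then pi/4 else 0))
      = (\<Sum>n<N. (a n)\<^sup>2 * (if n \<noteq> 0 then pi/4 else 0))"
  proof (rule sum.cong[OF refl])
    fix n assume n: "n \<in> {..<N}"
    have "(\<Sum>m<N. a n * a m * (if n = m \<and> n \<noteq> 0 then pi/4 else 0))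
        = (\<Sum>m<N. if n = m then a n * a m * (if n \<noteq> 0 then pi/4 else 0) else 0)"
      by (rule sum.cong) auto
    also have "\<dots> = (a n)\<^sup>2 * (if n \<noteq> 0 then pi/4 else 0)"
      using n by (simp add: sum.delta power2_eq_square)
    finally show "(\<Sum>m<N. a n * a m * (if n = m \<and> n \<noteq> 0 then pi/4 else 0)) = (a n)\<^sup>2 * (if n \<noteq> 0 then pi/4 else 0)" .
  qed
  ultimately show ?thesis unfolding eq a_def by simp
qed

lemma bessel_sym:
  assumes "\<sigma> \<in> {0..pi/2}" "t \<in> {0..pi/2}"
  shows "(\<Sum>n<N. ((sin (2 * real n * \<sigma>) - sin (2 * real n * t)) / real n)\<^sup>2) \<le> pi * \<bar>\<sigma> - t\<bar>"
proof (cases "t \<le> \<sigma>")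
  case True
  then show ?thesis using bessel_cos[of t \<sigma> N] assms by auto
next
  case False
  have "(\<Sum>n<N. ((sin (2 * real n * \<sigma>) - sin (2 * real n * t)) / real n)\<^sup>2)
      = (\<Sum>n<N. ((sin (2 * real n * t) - sin (2 * real n * \<sigma>)) / real n)\<^sup>2)"
    by (rule sum.cong) (auto simp: power2_eq_square algebra_simps diff_divide_distrib)
  then show ?thesis using bessel_cos[of \<sigma> t N] assms False by auto
qed

lemma SN_bound:
  assumes r: "0 \<le> r" "r \<le> 1" and st: "\<sigma> \<in> {0..pi/2}" "t \<in> {0..pi/2}"
  shows "(\<integral>\<^sup>+s. ennreal (indicator {0..pi/2} s * (SN N r \<sigma> t s)\<^sup>2) \<partial>lborel) \<le> ennreal (pi\<^sup>2 * \<bar>\<sigma> - t\<bar>)"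
proof -
  let ?I = "(\<Sum>n<N. (2 * r^n * (sin (2 * real n * \<sigma>) - sin (2 * real n * t)) / real n)\<^sup>2 * (if n \<noteq> 0 then pi/4 else 0))"
  have "(\<integral>\<^sup>+s. ennreal (indicator {0..pi/2} s * (SN N r \<sigma> t s)\<^sup>2) \<partial>lborel) = ennreal ?I"
    by (rule nn_integral_has_integral_lebesgue[OF _ SN_integral]) simp
  also have "?I \<le> pi * (\<Sum>n<N. ((sin (2 * real n * \<sigma>) - sin (2 * real n * t)) / real n)\<^sup>2)"
  proof -
    have "?I \<le> (\<Sum>n<N. pi * ((sin (2 * real n * \<sigma>) - sin (2 * real n * t)) / real n)\<^sup>2)"
    proof (rule sum_mono)
      fix n
      let ?g = "(sin (2 * real n * \<sigma>) - sin (2 * real n * t)) / real n"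
      have "(2 * r^n * (sin (2 * real n * \<sigma>) - sin (2 * real n * t)) / real n)\<^sup>2 = 4 * (r^n)\<^sup>2 * ?g\<^sup>2"
        by (simp add: power2_eq_square)
      moreover have "(r^n)\<^sup>2 \<le> 1" using r by (simp add: power_le_one)
      ultimately have "(2 * r^n * (sin (2 * real n * \<sigma>) - sin (2 * real n * t)) / real n)\<^sup>2 \<le> 4 * ?g\<^sup>2"
        by (simp add: mult_left_le_one_le)
      then show "(2 * r^n * (sin (2 * real n * \<sigma>) - sin (2 * real n * t)) / real n)\<^sup>2 * (if n \<noteq> 0 then pi/4 else 0)
          \<le> pi * ?g\<^sup>2"
        using pi_gt_zero by (auto simp: mult.commute)
    qed
    then show ?thesis by (simp add: sum_distrib_left)
  qed
  then have "ennreal ?I \<le> ennreal (pi * (pi * \<bar>\<sigma> - t\<bar>))"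
    using bessel_sym[OF st, of N] by (intro ennreal_leI) (meson mult_left_mono order_trans pi_ge_zero)
  finally show ?thesis by (simp add: power2_eq_square mult.assoc)
qed

lemma Dr_bound:
  assumes r: "0 \<le> r" "r < 1" and st: "\<sigma> \<in> {0..pi/2}" "t \<in> {0..pi/2}"
  shows "(\<integral>\<^sup>+s. ennreal (indicator {0..pi/2} s * (Dr r \<sigma> t s)\<^sup>2) \<partial>lborel) \<le> ennreal (pi\<^sup>2 * \<bar>\<sigma> - t\<bar>)"
proof (rule fatou_sq[where f = "\<lambda>N. SN N r \<sigma> t"])
  show "SN N r \<sigma> t \<in> borel_measurable lborel" for N unfolding SN_def by measurable
  show "AE x in lborel. x \<in> {0..pi/2} \<longrightarrow> (\<lambda>N. SN N r \<sigma> t x) \<longlonglongrightarrow> Dr r \<sigma> t x"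
    using SN_tendsto[OF r] by auto
  show "{0..pi/2} \<in> sets lborel" by simp
  show "(\<integral>\<^sup>+s. ennreal (indicator {0..pi/2} s * (SN N r \<sigma> t s)\<^sup>2) \<partial>lborel) \<le> ennreal (pi\<^sup>2 * \<bar>\<sigma> - t\<bar>)" for N
    using SN_bound[OF _ _ st] r by auto
qed




lemma amgm_inf:
  fixes x C B :: real
  assumes C: "0 \<le> C" and B: "0 \<le> B" and h: "\<And>l. 0 < l \<Longrightarrow> x \<le> (l * C + B / l) / 2"
  shows "x \<le> sqrt C * sqrt B"
proof (cases "C > 0 \<and> B > 0")
  case True
  define l where "l = sqrt B / sqrt C"
  have l: "l > 0" using True by (simp add: l_def)
  have "l * C = sqrt C * sqrt B"
    using True by (simp add: l_def field_simps)
  moreover have "B / l = sqrt C * sqrt B"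
    using True by (simp add: l_def field_simps)
  ultimately show ?thesis using h[OF l] by (simp add: mult.commute)
next
  case False
  then have z: "C = 0 \<or> B = 0" using B C by linarith
  show ?thesis
  proof (rule ccontr)
    assume "\<not> x \<le> sqrt C * sqrt B"
    then have x: "x > 0" using z by auto
    show False
    proof (cases "C = 0")
      case True
      define l where "l = B / x + 1"
      have l: "l > 0" using B x by (simp add: l_def add_nonneg_pos)
      have "B / l < x"
      proof -
        have "B < x * l" using x B by (simp add: l_def distrib_left)
        then show ?thesis using l by (simp add: divide_less_eq)
      qed
      then show False using h[OF l] True x by simp
    next
      case False
      with z have B0: "B = 0" by simp
      define l where "l = x / (C + 1)"
      have l: "l > 0" using C x by (simp add: l_def)
      have "l * C < x"
      proof -
        have "l * C \<le> l * (C + 1) - l" by (simp add: algebra_simps)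
        also have "\<dots> = x - l" using C by (simp add: l_def)
        finally show ?thesis using l by simp
      qed
      then show False using h[OF l] B0 x by simp
    qed
  qed
qed

lemma cs_L2:
  fixes f w :: "real \<Rightarrow> real" and A :: "real set"
  assumes fm: "f \<in> borel_measurable lborel"
    and wm: "set_borel_measurable lborel A w"
    and A: "A \<in> sets lborel"
    and wi: "set_integrable lborel A (\<lambda>s. (w s)\<^sup>2)"
    and fb: "(\<integral>\<^sup>+x. ennreal (indicator A x * (f x)\<^sup>2) \<partial>lborel) \<le> ennreal C"
    and C: "0 \<le> C"
  shows "set_integrable lborel A (\<lambda>s. f s * w s)
    \<and> \<bar>LINT s:A|lborel. f s * w s\<bar> \<le> sqrt C * sqrt (LINT s:A|lborel. (w s)\<^sup>2)"
proof -
  define F2 where "F2 x = indicator A x * (f x)\<^sup>2" for x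
  define W2 where "W2 x = indicator A x * (w x)\<^sup>2" for x
  define G where "G x = indicator A x * (f x * w x)" for x
  have wm': "(\<lambda>x. indicator A x * w x) \<in> borel_measurable lborel"
    using wm unfolding set_borel_measurable_def by simp
  have F2m: "F2 \<in> borel_measurable lborel" unfolding F2_def using fm A by measurable
  have F2i: "integrable lborel F2"
  proof (rule integrableI_bounded[OF F2m])
    have "(\<integral>\<^sup>+x. ennreal (norm (F2 x)) \<partial>lborel) = (\<integral>\<^sup>+x. ennreal (indicator A x * (f x)\<^sup>2) \<partial>lborel)"
      by (intro nn_integral_cong) (simp add: F2_def)
    also have "\<dots> < \<infinity>" using fb by (simp add: le_less_trans)
    finally show "(\<integral>\<^sup>+x. ennreal (norm (F2 x)) \<partial>lborel) < \<infinity>" .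
  qed
  have F2C: "integral\<^sup>L lborel F2 \<le> C"
  proof -
    have "ennreal (integral\<^sup>L lborel F2) = (\<integral>\<^sup>+x. ennreal (F2 x) \<partial>lborel)"
      by (rule nn_integral_eq_integral[symmetric, OF F2i]) (simp add: F2_def)
    also have "\<dots> \<le> ennreal C" using fb by (simp add: F2_def)
    finally show ?thesis using C by (simp add: ennreal_le_iff)
  qed
  have W2i: "integrable lborel W2"
    using wi unfolding set_integrable_def W2_def by simp
  have W2eq: "(LINT s:A|lborel. (w s)\<^sup>2) = integral\<^sup>L lborel W2"
    unfolding set_lebesgue_integral_def W2_def by simp
  have Gm: "G \<in> borel_measurable lborel"
  proof -
    have "G = (\<lambda>x. f x * (indicator A x * w x))" by (auto simp: G_def fun_eq_iff)
    then show ?thesis using fm wm' by simp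
  qed
  have pw: "\<bar>G x\<bar> \<le> (l * F2 x + W2 x / l) / 2" if l: "l > 0" for l x
  proof -
    have "0 \<le> (l * \<bar>f x\<bar> - \<bar>w x\<bar>)\<^sup>2" by simp
    then have "2 * l * (\<bar>f x\<bar> * \<bar>w x\<bar>) \<le> l\<^sup>2 * (f x)\<^sup>2 + (w x)\<^sup>2"
      by (simp add: power2_eq_square algebra_simps)
    then have "2 * (\<bar>f x\<bar> * \<bar>w x\<bar>) \<le> l * (f x)\<^sup>2 + (w x)\<^sup>2 / l"
      using l by (simp add: field_simps power2_eq_square)
    then show ?thesis unfolding G_def F2_def W2_def
      by (cases "x \<in> A") (auto simp: abs_mult)
  qed
  have Gi: "integrable lborel G"
  proof (rule Bochner_Integration.integrable_bound[OF _ Gm])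
    show "integrable lborel (\<lambda>x. (1 * F2 x + W2 x / 1) / 2)" using F2i W2i by simp
    show "AE x in lborel. norm (G x) \<le> norm ((1 * F2 x + W2 x / 1) / 2)"
      using pw[of 1] by (auto simp: F2_def W2_def)
  qed
  have "\<bar>integral\<^sup>L lborel G\<bar> \<le> sqrt C * sqrt (integral\<^sup>L lborel W2)"
  proof (rule amgm_inf[OF C])
    show "0 \<le> integral\<^sup>L lborel W2" by (simp add: W2_def)
    fix l :: real assume l: "l > 0"
    have "\<bar>integral\<^sup>L lborel G\<bar> \<le> integral\<^sup>L lborel (\<lambda>x. (l * F2 x + W2 x / l) / 2)"
      by (rule integral_abs_bound_integral[OF Gi]) (use F2i W2i pw[OF l] in auto)
    also have "\<dots> = (l * integral\<^sup>L lborel F2 + integral\<^sup>L lborel W2 / l) / 2"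
      using F2i W2i by simp
    also have "\<dots> \<le> (l * C + integral\<^sup>L lborel W2 / l) / 2"
      using F2C l by (simp add: mult_left_mono)
    finally show "\<bar>integral\<^sup>L lborel G\<bar> \<le> (l * C + integral\<^sup>L lborel W2 / l) / 2" .
  qed
  moreover have "set_integrable lborel A (\<lambda>s. f s * w s)"
    using Gi unfolding set_integrable_def G_def by simp
  moreover have "(LINT s:A|lborel. f s * w s) = integral\<^sup>L lborel G"
    unfolding set_lebesgue_integral_def G_def by simp
  ultimately show ?thesis using W2eq by simp
qed




definition rk :: "nat \<Rightarrow> real" where "rk k = 1 - inverse (real (Suc k))"

lemma rk_props: "0 \<le> rk k" "rk k < 1" "rk \<longlonglongrightarrow> 1"
proof -
  have "inverse (real (Suc k)) \<le> 1" by (simp add: inverse_le_1_iff)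
  then show "0 \<le> rk k" by (simp add: rk_def)
  show "rk k < 1" by (simp add: rk_def)
  show "rk \<longlonglongrightarrow> 1"
    using LIMSEQ_inverse_real_of_nat_add[of "-1"] tendsto_minus[OF LIMSEQ_inverse_real_of_nat_add[of "-1"]]
    unfolding rk_def by simp
qed

lemma Lr_lim:
  assumes "sin x \<noteq> 0"
  shows "(\<lambda>k. Lr (rk k) (2*x)) \<longlonglongrightarrow> ln 4 + 2 * ln \<bar>sin x\<bar>"
proof -
  have "(\<lambda>k. 1 - 2 * rk k * cos (2*x) + (rk k)\<^sup>2) \<longlonglongrightarrow> 1 - 2 * 1 * cos (2*x) + 1\<^sup>2"
    by (intro tendsto_intros rk_props)
  moreover have "1 - 2 * 1 * cos (2*x) + 1\<^sup>2 = 4 * \<bar>sin x\<bar>^2"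
    by (simp add: cos_double_sin)
  ultimately have "(\<lambda>k. Lr (rk k) (2*x)) \<longlonglongrightarrow> ln (4 * \<bar>sin x\<bar>^2)"
    unfolding Lr_def using assms by (intro tendsto_ln) auto
  moreover have "ln (4 * \<bar>sin x\<bar>^2) = ln 4 + 2 * ln \<bar>sin x\<bar>"
  proof -
    have "ln (4 * \<bar>sin x\<bar>^2) = ln 4 + ln (\<bar>sin x\<bar>^2)" using assms by (intro ln_mult_pos) auto
    moreover have "ln (\<bar>sin x\<bar>^2) = real 2 * ln \<bar>sin x\<bar>" by (rule ln_realpow)
    ultimately show ?thesis by simp
  qed
  ultimately show ?thesis by simp
qed

lemma sin_ne:
  assumes s: "0 < s" "s < pi/2" and \<sigma>: "0 \<le> \<sigma>" "\<sigma> \<le> pi/2" and ne: "s \<noteq> \<sigma>"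
  shows "sin (s + \<sigma>) \<noteq> 0" "sin (s - \<sigma>) \<noteq> 0"
proof -
  show "sin (s + \<sigma>) \<noteq> 0" using sin_gt_zero[of "s+\<sigma>"] s \<sigma> by auto
  show "sin (s - \<sigma>) \<noteq> 0"
  proof (cases "s > \<sigma>")
    case True then show ?thesis using sin_gt_zero[of "s-\<sigma>"] s \<sigma> by auto
  next
    case False
    then have "\<sigma> > s" using ne by auto
    then have "sin (\<sigma> - s) > 0" using sin_gt_zero[of "\<sigma>-s"] s \<sigma> by auto
    then show ?thesis by (metis minus_diff_eq sin_minus neg_0_equal_iff_equal less_irrefl)
  qed
qed

lemma K_eq:
  assumes s: "0 < s" "s < pi/2" and \<sigma>: "0 \<le> \<sigma>" "\<sigma> \<le> pi/2" and ne: "s \<noteq> \<sigma>"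
  shows "K s \<sigma> = ln \<bar>sin (s + \<sigma>)\<bar> - ln \<bar>sin (s - \<sigma>)\<bar>"
  using sin_ne[OF assms] ne unfolding K_def by (simp add: abs_divide ln_div)

lemma Dr_lim:
  assumes s: "0 < s" "s < pi/2" and \<sigma>: "0 \<le> \<sigma>" "\<sigma> \<le> pi/2" and t: "0 \<le> t" "t \<le> pi/2"
    and ne: "s \<noteq> \<sigma>" "s \<noteq> t"
  shows "(\<lambda>k. Dr (rk k) \<sigma> t s) \<longlonglongrightarrow> K s \<sigma> - K s t"
proof -
  note a = sin_ne[OF s \<sigma> ne(1)] and b = sin_ne[OF s t ne(2)]
  have "(\<lambda>k. Dr (rk k) \<sigma> t s) \<longlonglongrightarrow>
     -(1/2) * ((ln 4 + 2 * ln \<bar>sin (s-\<sigma>)\<bar>) - (ln 4 + 2 * ln \<bar>sin (s+\<sigma>)\<bar>)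
       - (ln 4 + 2 * ln \<bar>sin (s-t)\<bar>) + (ln 4 + 2 * ln \<bar>sin (s+t)\<bar>))"
    unfolding Dr_def by (intro tendsto_intros Lr_lim a b)
  moreover have "-(1/2) * ((ln 4 + 2 * ln \<bar>sin (s-\<sigma>)\<bar>) - (ln 4 + 2 * ln \<bar>sin (s+\<sigma>)\<bar>)
       - (ln 4 + 2 * ln \<bar>sin (s-t)\<bar>) + (ln 4 + 2 * ln \<bar>sin (s+t)\<bar>)) = K s \<sigma> - K s t"
    unfolding K_eq[OF s \<sigma> ne(1)] K_eq[OF s t ne(2)] by (simp add: algebra_simps)
  ultimately show ?thesis by simp
qed

lemma K_meas: "(\<lambda>s. K s \<sigma>) \<in> borel_measurable lborel"
  unfolding K_def by measurable

lemma K_sq_bound: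
  assumes st: "\<sigma> \<in> {0..pi/2}" "t \<in> {0..pi/2}"
  shows "(\<integral>\<^sup>+s. ennreal (indicator {0..pi/2} s * (K s \<sigma> - K s t)\<^sup>2) \<partial>lborel) \<le> ennreal (pi\<^sup>2 * \<bar>\<sigma> - t\<bar>)"
proof (rule fatou_sq[where f = "\<lambda>k. Dr (rk k) \<sigma> t"])
  show "Dr (rk k) \<sigma> t \<in> borel_measurable lborel" for k unfolding Dr_def Lr_def by measurable
  have "AE x in lborel. x \<notin> {0, pi/2, \<sigma>, t}"
    by (intro AE_not_in finite_imp_null_set_lborel) simp
  then show "AE x in lborel. x \<in> {0..pi/2} \<longrightarrow> (\<lambda>k. Dr (rk k) \<sigma> t x) \<longlonglongrightarrow> K x \<sigma> - K x t"
  proof eventually_elim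
    case (elim x)
    show ?case
    proof
      assume "x \<in> {0..pi/2}"
      with elim have "0 < x" "x < pi/2" by auto
      then show "(\<lambda>k. Dr (rk k) \<sigma> t x) \<longlonglongrightarrow> K x \<sigma> - K x t"
        using Dr_lim[of x \<sigma> t] st elim by auto
    qed
  qed
  show "{0..pi/2} \<in> sets lborel" by simp
  show "(\<integral>\<^sup>+s. ennreal (indicator {0..pi/2} s * (Dr (rk k) \<sigma> t s)\<^sup>2) \<partial>lborel) \<le> ennreal (pi\<^sup>2 * \<bar>\<sigma> - t\<bar>)" for k
    using Dr_bound[OF rk_props(1,2) st] by auto
qed




lemma K_zero_left: "K s 0 = 0"
  by (cases "sin s = 0") (auto simp: K_def)

lemma K_pi2: "K s (pi/2) = 0"
proof -
  have "sin (s + pi/2) = cos s" "sin (s - pi/2) = - cos s" by (simp_all add: sin_add sin_diff)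
  then show ?thesis by (cases "cos s = 0") (auto simp: K_def)
qed

lemma H_bound:
  assumes w: "in_L2 w" and st: "\<sigma> \<in> {0..pi/2}" "t \<in> {0..pi/2}"
  shows "\<bar>H w \<sigma> - H w t\<bar> \<le> L2_norm w * \<bar>\<sigma> - t\<bar> powr (1/2)"
proof -
  let ?A = "{0..pi/2::real}"
  have wm: "set_borel_measurable lborel ?A w" and wi: "set_integrable lborel ?A (\<lambda>s. (w s)\<^sup>2)"
    using w unfolding in_L2_def by auto
  have Ki: "set_integrable lborel ?A (\<lambda>s. K s x * w s)" if x: "x \<in> ?A" for x
  proof -
    have "(\<integral>\<^sup>+s. ennreal (indicator ?A s * (K s x)\<^sup>2) \<partial>lborel) \<le> ennreal (pi\<^sup>2 * \<bar>x - 0\<bar>)"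
      using K_sq_bound[OF x, of 0] by (simp add: K_zero_left)
    from cs_L2[OF K_meas wm _ wi this] show ?thesis by simp
  qed
  have "(\<integral>\<^sup>+s. ennreal (indicator ?A s * (K s \<sigma> - K s t)\<^sup>2) \<partial>lborel) \<le> ennreal (pi\<^sup>2 * \<bar>\<sigma> - t\<bar>)"
    by (rule K_sq_bound[OF st])
  from cs_L2[OF _ wm _ wi this] K_meas[of \<sigma>] K_meas[of t]
  have cs: "\<bar>LINT s:?A|lborel. (K s \<sigma> - K s t) * w s\<bar> \<le> sqrt (pi\<^sup>2 * \<bar>\<sigma> - t\<bar>) * sqrt (LINT s:?A|lborel. (w s)\<^sup>2)"
    by simp
  have "(LINT s:?A|lborel. (K s \<sigma> - K s t) * w s) = (LINT s:?A|lborel. K s \<sigma> * w s - K s t * w s)"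
    by (simp add: left_diff_distrib)
  also have "\<dots> = (LINT s:?A|lborel. K s \<sigma> * w s) - (LINT s:?A|lborel. K s t * w s)"
    by (rule set_integral_diff(2)[OF Ki[OF st(1)] Ki[OF st(2)]])
  finally have eq: "H w \<sigma> - H w t = (1/pi) * (LINT s:?A|lborel. (K s \<sigma> - K s t) * w s)"
    unfolding H_def by (simp add: right_diff_distrib)
  have sq: "sqrt (pi\<^sup>2 * \<bar>\<sigma> - t\<bar>) = pi * sqrt \<bar>\<sigma> - t\<bar>" by (simp add: real_sqrt_mult)
  then have "\<bar>H w \<sigma> - H w t\<bar> \<le> (1/pi) * (pi * sqrt \<bar>\<sigma> - t\<bar> * sqrt (LINT s:?A|lborel. (w s)\<^sup>2))"
  proof -
    have "\<bar>1/pi\<bar> = 1/pi" using pi_gt_zero by simp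
    moreover have c2: "\<bar>LINT s:?A|lborel. (K s \<sigma> - K s t) * w s\<bar> \<le> pi * sqrt \<bar>\<sigma> - t\<bar> * sqrt (LINT s:?A|lborel. (w s)\<^sup>2)"
      using cs sq by simp
    ultimately show ?thesis unfolding eq abs_mult
      by (simp only:) (rule mult_left_mono[OF c2], simp)
  qed
  also have "\<dots> = L2_norm w * \<bar>\<sigma> - t\<bar> powr (1/2)"
    by (simp add: L2_norm_def powr_half_sqrt)
  finally show ?thesis .
qed

theorem lemma3p3:
  fixes w u :: "real \<Rightarrow> real"
  assumes "in_L2 w"
    and "u = H w"
  shows "holder_on {0..pi/2} (1/2) u
    \<and> u 0 = 0 \<and> u (pi/2) = 0
    \<and> (\<forall>\<sigma>\<in>{0..pi/2}. \<forall>s\<in>{0..pi/2}. \<bar>u \<sigma> - u s\<bar> \<le> L2_norm w * \<bar>\<sigma> - s\<bar> powr (1/2))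
    \<and> (\<forall>\<sigma>\<in>{0..pi/2}. \<bar>u \<sigma>\<bar> \<le> L2_norm w * \<sigma> powr (1/2))
    \<and> (\<forall>\<sigma>\<in>{0..pi/2}. \<bar>u \<sigma>\<bar> \<le> L2_norm w * \<bar>pi/2 - \<sigma>\<bar> powr (1/2))"
proof -
  have B: "\<forall>\<sigma>\<in>{0..pi/2}. \<forall>s\<in>{0..pi/2}. \<bar>u \<sigma> - u s\<bar> \<le> L2_norm w * \<bar>\<sigma> - s\<bar> powr (1/2)"
    using H_bound[OF assms(1)] assms(2) by auto
  have u0: "u 0 = 0" unfolding assms(2) H_def by (simp add: K_zero_left)
  have u1: "u (pi/2) = 0" unfolding assms(2) H_def by (simp add: K_pi2)
  have "holder_on {0..pi/2} (1/2) u" unfolding holder_on_def using B by blast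
  moreover have "\<forall>\<sigma>\<in>{0..pi/2}. \<bar>u \<sigma>\<bar> \<le> L2_norm w * \<sigma> powr (1/2)"
  proof
    fix \<sigma> :: real assume s: "\<sigma> \<in> {0..pi/2}"
    moreover have "(0::real) \<in> {0..pi/2}" by simp
    ultimately have "\<bar>u \<sigma> - u 0\<bar> \<le> L2_norm w * \<bar>\<sigma> - 0\<bar> powr (1/2)" using B by blast
    then show "\<bar>u \<sigma>\<bar> \<le> L2_norm w * \<sigma> powr (1/2)" using s u0 by simp
  qed
  moreover have "\<forall>\<sigma>\<in>{0..pi/2}. \<bar>u \<sigma>\<bar> \<le> L2_norm w * \<bar>pi/2 - \<sigma>\<bar> powr (1/2)"
  proof
    fix \<sigma> :: real assume s: "\<sigma> \<in> {0..pi/2}"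
    moreover have "pi/2 \<in> {0..pi/2}" by simp
    ultimately have "\<bar>u \<sigma> - u (pi/2)\<bar> \<le> L2_norm w * \<bar>\<sigma> - pi/2\<bar> powr (1/2)" using B by blast
    then show "\<bar>u \<sigma>\<bar> \<le> L2_norm w * \<bar>pi/2 - \<sigma>\<bar> powr (1/2)" using u1 by (simp add: abs_minus_commute)
  qed
  ultimately show ?thesis using B u0 u1 by blast
qed


end
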